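(* Let $(M_n,d_n,x_n)_{n\in\mathbb{N}}$ be a sequence of pointed geodesic spaces each satisfying the symmetric orthogonality property $(SO)$ (resp. its stable version $(SO^* )$), and let $\omega$ be a non-principal ultrafilter on $\mathbb{N}$. If the ultralimit $\lim_\omega(M_n,d_n,x_n)$ is uniquely geodesic and nearest point projections onto its compact convex sets are unique, then $\lim_\omega(M_n,d_n,x_n)$ satisfies $(SO)$ (resp. $(SO^* )$).
   Context: The ultralimit $\lim_\omega(M_n,d_n,x_n)$ is the set of sequences $(y_n)$, $y_n\in M_n$, with $\lim_\omega d_n(y_n,x_n)<\infty$, modulo the relation $\lim_\omega d_n(y_n,z_n)=0$, with metric $d_\omega((y_n),(z_n))=\lim_\omega d_n(y_n,z_n)$. Geodesics are maps $\gamma:[0,1]\to X$ with $\delta(\gamma_t,\gamma_s)=|t-s|\delta(\gamma_0,\gamma_1)$. For $p=\gamma_0=\eta_0$, $\gamma\perp_p\eta$ means $\delta(p,\gamma_t)\le\delta(\eta_s,\gamma_t)$ for all $s,t\in[0,1]$; $(SO)$ means $\gamma\perp_p\eta$ implies $\eta\perp_p\gamma$ for all such geodesics. $(SO^* )$ for $(X,\delta)$ means $X\times_2\mathbb{R}$ ($X\times\mathbb{R}$ with metric $\tilde\delta((x,t),(y,s))^2=\delta(x,y)^2+|t-s|^2$) satisfies $(SO)$. A set is convex if all geodesics between its points lie in it. *)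

theory Defs
  imports "HOL-Analysis.Analysis"
begin

definition geodesic :: "'p set \<Rightarrow> ('p \<Rightarrow> 'p \<Rightarrow> real) \<Rightarrow> (real \<Rightarrow> 'p) \<Rightarrow> bool" where
  "geodesic X \<delta> \<gamma> \<longleftrightarrow> \<gamma> ` {0..1} \<subseteq> X \<and>
     (\<forall>t\<in>{0..1}. \<forall>s\<in>{0..1}. \<delta> (\<gamma> t) (\<gamma> s) = \<bar>t - s\<bar> * \<delta> (\<gamma> 0) (\<gamma> 1))"

definition geodesic_space :: "'p set \<Rightarrow> ('p \<Rightarrow> 'p \<Rightarrow> real) \<Rightarrow> bool" where
  "geodesic_space X \<delta> \<longleftrightarrow> Metric_space X \<delta> \<and>
     (\<forall>x\<in>X. \<forall>y\<in>X. \<exists>\<gamma>. geodesic X \<delta> \<gamma> \<and> \<gamma> 0 = x \<and> \<gamma> 1 = y)"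

definition uniquely_geodesic :: "'p set \<Rightarrow> ('p \<Rightarrow> 'p \<Rightarrow> real) \<Rightarrow> bool" where
  "uniquely_geodesic X \<delta> \<longleftrightarrow> geodesic_space X \<delta> \<and>
     (\<forall>\<gamma> \<eta>. geodesic X \<delta> \<gamma> \<and> geodesic X \<delta> \<eta> \<and> \<gamma> 0 = \<eta> 0 \<and> \<gamma> 1 = \<eta> 1
        \<longrightarrow> (\<forall>t\<in>{0..1}. \<gamma> t = \<eta> t))"

definition convex_set :: "'p set \<Rightarrow> ('p \<Rightarrow> 'p \<Rightarrow> real) \<Rightarrow> 'p set \<Rightarrow> bool" where
  "convex_set X \<delta> C \<longleftrightarrow> C \<subseteq> X \<and>
     (\<forall>\<gamma>. geodesic X \<delta> \<gamma> \<and> \<gamma> 0 \<in> C \<and> \<gamma> 1 \<in> C \<longrightarrow> \<gamma> ` {0..1} \<subseteq> C)"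

definition unique_projections :: "'p set \<Rightarrow> ('p \<Rightarrow> 'p \<Rightarrow> real) \<Rightarrow> bool" where
  "unique_projections X \<delta> \<longleftrightarrow>
     (\<forall>K. K \<noteq> {} \<and> compactin (Metric_space.mtopology X \<delta>) K \<and> convex_set X \<delta> K \<longrightarrow>
        (\<forall>p\<in>X. \<exists>!q. q \<in> K \<and> (\<forall>k\<in>K. \<delta> p q \<le> \<delta> p k)))"

definition orth :: "('p \<Rightarrow> 'p \<Rightarrow> real) \<Rightarrow> (real \<Rightarrow> 'p) \<Rightarrow> (real \<Rightarrow> 'p) \<Rightarrow> bool" where
  "orth \<delta> \<gamma> \<eta> \<longleftrightarrow> (\<forall>s\<in>{0..1}. \<forall>t\<in>{0..1}. \<delta> (\<gamma> 0) (\<gamma> t) \<le> \<delta> (\<eta> s) (\<gamma> t))"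

definition SO :: "'p set \<Rightarrow> ('p \<Rightarrow> 'p \<Rightarrow> real) \<Rightarrow> bool" where
  "SO X \<delta> \<longleftrightarrow> (\<forall>\<gamma> \<eta>. geodesic X \<delta> \<gamma> \<and> geodesic X \<delta> \<eta> \<and> \<gamma> 0 = \<eta> 0 \<and> orth \<delta> \<gamma> \<eta>
      \<longrightarrow> orth \<delta> \<eta> \<gamma>)"

definition prod_l2 :: "('p \<Rightarrow> 'p \<Rightarrow> real) \<Rightarrow> 'p \<times> real \<Rightarrow> 'p \<times> real \<Rightarrow> real" where
  "prod_l2 \<delta> a b = sqrt ((\<delta> (fst a) (fst b))\<^sup>2 + \<bar>snd a - snd b\<bar>\<^sup>2)"

definition SO_star :: "'p set \<Rightarrow> ('p \<Rightarrow> 'p \<Rightarrow> real) \<Rightarrow> bool" where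
  "SO_star X \<delta> \<longleftrightarrow> SO (X \<times> (UNIV :: real set)) (prod_l2 \<delta>)"

definition nonprincipal_ultrafilter :: "nat filter \<Rightarrow> bool" where
  "nonprincipal_ultrafilter \<omega> \<longleftrightarrow> \<omega> \<noteq> bot \<and>
     (\<forall>P. eventually P \<omega> \<or> eventually (\<lambda>n. \<not> P n) \<omega>) \<and>
     (\<forall>k. eventually (\<lambda>n. n \<noteq> k) \<omega>)"

definition UL_seqs :: "nat filter \<Rightarrow> (nat \<Rightarrow> 'a set) \<Rightarrow> (nat \<Rightarrow> 'a \<Rightarrow> 'a \<Rightarrow> real)
    \<Rightarrow> (nat \<Rightarrow> 'a) \<Rightarrow> (nat \<Rightarrow> 'a) set" where
  "UL_seqs \<omega> M d x = {y. (\<forall>n. y n \<in> M n) \<and>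
      Lim \<omega> (\<lambda>n. ereal (d n (y n) (x n))) < \<infinity>}"

definition UL_pdist :: "nat filter \<Rightarrow> (nat \<Rightarrow> 'a \<Rightarrow> 'a \<Rightarrow> real) \<Rightarrow> (nat \<Rightarrow> 'a) \<Rightarrow> (nat \<Rightarrow> 'a) \<Rightarrow> real" where
  "UL_pdist \<omega> d y z = Lim \<omega> (\<lambda>n. d n (y n) (z n))"

definition UL_space :: "nat filter \<Rightarrow> (nat \<Rightarrow> 'a set) \<Rightarrow> (nat \<Rightarrow> 'a \<Rightarrow> 'a \<Rightarrow> real)
    \<Rightarrow> (nat \<Rightarrow> 'a) \<Rightarrow> (nat \<Rightarrow> 'a) set set" where
  "UL_space \<omega> M d x = (\<lambda>y. {z \<in> UL_seqs \<omega> M d x. UL_pdist \<omega> d y z = 0}) ` UL_seqs \<omega> M d x"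

definition UL_dist :: "nat filter \<Rightarrow> (nat \<Rightarrow> 'a \<Rightarrow> 'a \<Rightarrow> real)
    \<Rightarrow> (nat \<Rightarrow> 'a) set \<Rightarrow> (nat \<Rightarrow> 'a) set \<Rightarrow> real" where
  "UL_dist \<omega> d A B = UL_pdist \<omega> d (SOME y. y \<in> A) (SOME z. z \<in> B)"

end

theory Submission
  imports Defs
begin



definition ultra :: "nat filter \<Rightarrow> bool" where
  "ultra F \<longleftrightarrow> F \<noteq> bot \<and> (\<forall>P. eventually P F \<or> eventually (\<lambda>n. \<not> P n) F)"

lemma ultra_lim_exists:
  fixes f :: "nat \<Rightarrow> 'b::{complete_linorder, linorder_topology}"
  assumes U: "\<forall>P. eventually P F \<or> eventually (\<lambda>n. \<not> P n) F"
  shows "(f \<longlongrightarrow> Sup {c. eventually (\<lambda>n. c \<le> f n) F}) F"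
proof (rule order_tendstoI)
  fix a assume "a < Sup {c. eventually (\<lambda>n. c \<le> f n) F}"
  then obtain c where c: "eventually (\<lambda>n. c \<le> f n) F" "a < c"
    by (auto simp: less_Sup_iff)
  then show "eventually (\<lambda>n. a < f n) F"
    by (auto elim: eventually_mono)
next
  fix a assume a: "Sup {c. eventually (\<lambda>n. c \<le> f n) F} < a"
  have "\<not> eventually (\<lambda>n. a \<le> f n) F"
  proof
    assume "eventually (\<lambda>n. a \<le> f n) F"
    then have "a \<le> Sup {c. eventually (\<lambda>n. c \<le> f n) F}" by (auto intro: Sup_upper)
    with a show False by simp
  qed
  with U have "eventually (\<lambda>n. \<not> a \<le> f n) F" by blast
  then show "eventually (\<lambda>n. f n < a) F"
    by (auto elim: eventually_mono simp: not_le)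
qed

lemma ultra_real_lim:
  fixes f :: "nat \<Rightarrow> real"
  assumes U: "ultra F" and B: "eventually (\<lambda>n. \<bar>f n\<bar> \<le> B) F"
  shows "(f \<longlongrightarrow> Lim F f) F"
proof -
  have nb: "F \<noteq> bot" and U': "\<forall>P. eventually P F \<or> eventually (\<lambda>n. \<not> P n) F"
    using U by (auto simp: ultra_def)
  define E where "E = Sup {c. eventually (\<lambda>n. c \<le> ereal (f n)) F}"
  have t: "((\<lambda>n. ereal (f n)) \<longlongrightarrow> E) F"
    unfolding E_def by (rule ultra_lim_exists[OF U'])
  have "E \<le> ereal B"
    by (rule tendsto_upperbound[OF t _ nb]) (use B in \<open>auto elim: eventually_mono\<close>)
  moreover have "ereal (-B) \<le> E"
    by (rule tendsto_lowerbound[OF t _ nb]) (use B in \<open>auto elim: eventually_mono\<close>)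
  ultimately obtain L where L: "E = ereal L"
    by (cases E) auto
  with t have "(f \<longlongrightarrow> L) F" by (simp add: lim_ereal)
  then show ?thesis using nb by (metis tendsto_Lim)
qed




locale ULset =
  fixes M :: "nat \<Rightarrow> 'a set" and d :: "nat \<Rightarrow> 'a \<Rightarrow> 'a \<Rightarrow> real"
    and x :: "nat \<Rightarrow> 'a" and \<omega> :: "nat filter"
  assumes met: "\<And>n. Metric_space (M n) (d n)"
    and base: "\<And>n. x n \<in> M n"
    and U: "ultra \<omega>"
begin

abbreviation "S \<equiv> UL_seqs \<omega> M d x"
definition cls where "cls y = {z \<in> S. UL_pdist \<omega> d y z = 0}"

lemma nb: "\<omega> \<noteq> bot" using U by (simp add: ultra_def)

lemma dnn: "0 \<le> d n a b" by (rule Metric_space.nonneg[OF met])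
lemma dcom: "d n a b = d n b a" by (rule Metric_space.commute[OF met])
lemma dtri: "a \<in> M n \<Longrightarrow> b \<in> M n \<Longrightarrow> c \<in> M n \<Longrightarrow> d n a c \<le> d n a b + d n b c"
  by (rule Metric_space.triangle[OF met])
lemma dzero: "a \<in> M n \<Longrightarrow> d n a a = 0"
  by (rule Metric_space.mdist_zero[OF met])

lemma ereal_lim_exists:
  fixes f :: "nat \<Rightarrow> ereal"
  shows "(f \<longlongrightarrow> Lim \<omega> f) \<omega>"
proof -
  have U': "\<forall>P. eventually P \<omega> \<or> eventually (\<lambda>n. \<not> P n) \<omega>" using U by (simp add: ultra_def)
  have "Lim \<omega> f = Sup {c. eventually (\<lambda>n. c \<le> f n) \<omega>}"
    by (rule tendsto_Lim[OF nb ultra_lim_exists[OF U']])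
  then show ?thesis using ultra_lim_exists[OF U', of f] by simp
qed

lemma seqs_bounded:
  assumes "y \<in> S" shows "\<exists>B. eventually (\<lambda>n. d n (y n) (x n) \<le> B) \<omega>"
proof -
  let ?f = "\<lambda>n. ereal (d n (y n) (x n))"
  have t: "(?f \<longlongrightarrow> Lim \<omega> ?f) \<omega>" by (rule ereal_lim_exists)
  have lt: "Lim \<omega> ?f < \<infinity>" using assms by (simp add: UL_seqs_def)
  obtain B :: real where "Lim \<omega> ?f < ereal B"
  proof (cases "Lim \<omega> ?f")
    case (real r) then show ?thesis using that[of "r+1"] by simp
  next
    case PInf then show ?thesis using lt by simp
  next
    case MInf then show ?thesis using that[of 0] by simp
  qed
  then have "eventually (\<lambda>n. ?f n < ereal B) \<omega>" by (rule order_tendstoD(2)[OF t])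
  then have "eventually (\<lambda>n. d n (y n) (x n) \<le> B) \<omega>"
    by (rule eventually_mono) simp
  then show ?thesis by blast
qed

lemma seqs_mem: "y \<in> S \<Longrightarrow> y n \<in> M n"
  by (simp add: UL_seqs_def)

lemma seqs_intro:
  assumes "\<And>n. y n \<in> M n" and "eventually (\<lambda>n. d n (y n) (x n) \<le> B) \<omega>"
  shows "y \<in> S"
proof -
  let ?f = "\<lambda>n. ereal (d n (y n) (x n))"
  have t: "(?f \<longlongrightarrow> Lim \<omega> ?f) \<omega>" by (rule ereal_lim_exists)
  have "Lim \<omega> ?f \<le> ereal B"
    by (rule tendsto_upperbound[OF t _ nb], rule eventually_mono[OF assms(2)]) simp
  then have "Lim \<omega> ?f < \<infinity>" by (cases "Lim \<omega> ?f") auto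
  with assms(1) show ?thesis by (simp add: UL_seqs_def)
qed

lemma pd_lim:
  assumes "y \<in> S" "z \<in> S"
  shows "((\<lambda>n. d n (y n) (z n)) \<longlongrightarrow> UL_pdist \<omega> d y z) \<omega>"
proof -
  obtain B1 where B1: "eventually (\<lambda>n. d n (y n) (x n) \<le> B1) \<omega>" using seqs_bounded[OF assms(1)] by blast
  obtain B2 where B2: "eventually (\<lambda>n. d n (z n) (x n) \<le> B2) \<omega>" using seqs_bounded[OF assms(2)] by blast
  have "eventually (\<lambda>n. \<bar>d n (y n) (z n)\<bar> \<le> B1 + B2) \<omega>"
    using B1 B2
  proof eventually_elim
    case (elim n)
    have "d n (y n) (z n) \<le> d n (y n) (x n) + d n (x n) (z n)"
      by (rule dtri[OF seqs_mem[OF assms(1)] base seqs_mem[OF assms(2)]])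
    then show ?case using elim dnn[of n "y n" "z n"] dcom[of n "x n" "z n"] by simp
  qed
  then show ?thesis unfolding UL_pdist_def by (rule ultra_real_lim[OF U])
qed

lemma self_cls: "y \<in> S \<Longrightarrow> y \<in> cls y"
proof -
  assume y: "y \<in> S"
  have "((\<lambda>n. d n (y n) (y n)) \<longlongrightarrow> 0) \<omega>"
    using dzero[OF seqs_mem[OF y]] by simp
  then have "UL_pdist \<omega> d y y = 0" using tendsto_unique[OF nb pd_lim[OF y y]] by blast
  then show ?thesis using y by (simp add: cls_def)
qed

lemma pd_tri:
  assumes "a \<in> S" "b \<in> S" "c \<in> S"
  shows "UL_pdist \<omega> d a c \<le> UL_pdist \<omega> d a b + UL_pdist \<omega> d b c"
proof (rule tendsto_le[OF nb _ pd_lim[OF assms(1,3)]])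
  show "((\<lambda>n. d n (a n) (b n) + d n (b n) (c n)) \<longlongrightarrow> UL_pdist \<omega> d a b + UL_pdist \<omega> d b c) \<omega>"
    by (intro tendsto_add pd_lim assms)
  show "\<forall>\<^sub>F n in \<omega>. d n (a n) (c n) \<le> d n (a n) (b n) + d n (b n) (c n)"
    by (intro always_eventually allI dtri seqs_mem assms)
qed

lemma pd_com:
  assumes "a \<in> S" "b \<in> S"
  shows "UL_pdist \<omega> d a b = UL_pdist \<omega> d b a"
proof -
  have "((\<lambda>n. d n (a n) (b n)) \<longlongrightarrow> UL_pdist \<omega> d b a) \<omega>"
    using pd_lim[OF assms(2,1)] dcom by simp
  then show ?thesis using tendsto_unique[OF nb pd_lim[OF assms]] by blast
qed

lemma dist_cls:
  assumes "y \<in> S" "z \<in> S"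
  shows "UL_dist \<omega> d (cls y) (cls z) = UL_pdist \<omega> d y z"
proof -
  define a where "a = (SOME a. a \<in> cls y)"
  define b where "b = (SOME b. b \<in> cls z)"
  have a: "a \<in> cls y" unfolding a_def using self_cls[OF assms(1)] by (metis someI)
  have b: "b \<in> cls z" unfolding b_def using self_cls[OF assms(2)] by (metis someI)
  have aS: "a \<in> S" and ya: "UL_pdist \<omega> d y a = 0" using a by (auto simp: cls_def)
  have bS: "b \<in> S" and zb: "UL_pdist \<omega> d z b = 0" using b by (auto simp: cls_def)
  have "UL_pdist \<omega> d a b \<le> UL_pdist \<omega> d a y + UL_pdist \<omega> d y b"
    by (rule pd_tri[OF aS assms(1) bS])
  moreover have "UL_pdist \<omega> d y b \<le> UL_pdist \<omega> d y z + UL_pdist \<omega> d z b"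
    by (rule pd_tri[OF assms(1) assms(2) bS])
  moreover have "UL_pdist \<omega> d y z \<le> UL_pdist \<omega> d y a + UL_pdist \<omega> d a z"
    by (rule pd_tri[OF assms(1) aS assms(2)])
  moreover have "UL_pdist \<omega> d a z \<le> UL_pdist \<omega> d a b + UL_pdist \<omega> d b z"
    by (rule pd_tri[OF aS bS assms(2)])
  moreover have "UL_pdist \<omega> d a y = 0" using ya pd_com[OF aS assms(1)] by simp
  moreover have "UL_pdist \<omega> d b z = 0" using zb pd_com[OF bS assms(2)] by simp
  ultimately have "UL_pdist \<omega> d a b = UL_pdist \<omega> d y z" using ya zb by linarith
  then show ?thesis by (simp add: UL_dist_def a_def b_def)
qed

lemma space_eq: "UL_space \<omega> M d x = cls ` S"
  by (simp add: UL_space_def cls_def)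

lemma lim_cls:
  assumes "y \<in> S" "z \<in> S"
  shows "((\<lambda>n. d n (y n) (z n)) \<longlongrightarrow> UL_dist \<omega> d (cls y) (cls z)) \<omega>"
  using pd_lim[OF assms] dist_cls[OF assms] by simp

lemma close:
  assumes "a \<in> S" "\<And>n. b n \<in> M n" "eventually (\<lambda>n. d n (a n) (b n) \<le> B) \<omega>"
  shows "b \<in> S"
proof -
  obtain B1 where B1: "eventually (\<lambda>n. d n (a n) (x n) \<le> B1) \<omega>" using seqs_bounded[OF assms(1)] by blast
  have "eventually (\<lambda>n. d n (b n) (x n) \<le> B + B1) \<omega>"
    using B1 assms(3)
  proof eventually_elim
    case (elim n)
    have "d n (b n) (x n) \<le> d n (b n) (a n) + d n (a n) (x n)"
      by (rule dtri[OF assms(2) seqs_mem[OF assms(1)] base])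
    then show ?case using elim dcom[of n "a n" "b n"] by simp
  qed
  then show ?thesis by (rule seqs_intro[OF assms(2)])
qed

end



lemma geod_mem: "geodesic X \<delta> g \<Longrightarrow> r \<in> {0..1} \<Longrightarrow> g r \<in> X"
  unfolding geodesic_def by blast

lemma geod_dist: "geodesic X \<delta> g \<Longrightarrow> r \<in> {0..1} \<Longrightarrow> r' \<in> {0..1} \<Longrightarrow>
   \<delta> (g r) (g r') = \<bar>r - r'\<bar> * \<delta> (g 0) (g 1)"
  unfolding geodesic_def by blast

lemma conv01: "a \<in> {0..1} \<Longrightarrow> b \<in> {0..1} \<Longrightarrow> v \<in> {0..1} \<Longrightarrow> a + v * (b - a) \<in> {0..(1::real)}"
proof -
  assume a: "a \<in> {0..1}" and b: "b \<in> {0..1}" and v: "v \<in> {0..1}"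
  have e: "a + v * (b - a) = (1 - v) * a + v * b" by (simp add: algebra_simps)
  have "0 \<le> (1 - v) * a" "0 \<le> v * b" using a b v by auto
  moreover have "(1 - v) * a \<le> 1 - v" "v * b \<le> v" using a b v by (auto simp: mult_left_le)
  ultimately show ?thesis unfolding e by auto
qed

lemma sub_geod:
  assumes g: "geodesic X \<delta> g" and a: "a \<in> {0..1}" and b: "b \<in> {0..1}"
  shows "geodesic X \<delta> (\<lambda>v. g (a + v * (b - a)))"
  unfolding geodesic_def
proof (intro conjI ballI)
  show "(\<lambda>v. g (a + v * (b - a))) ` {0..1} \<subseteq> X"
    using geod_mem[OF g conv01[OF a b]] by auto
  fix t s :: real assume t: "t \<in> {0..1}" and s: "s \<in> {0..1}"
  have "\<delta> (g (a + t * (b - a))) (g (a + s * (b - a))) = \<bar>(a + t * (b - a)) - (a + s * (b - a))\<bar> * \<delta> (g 0) (g 1)"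
    by (rule geod_dist[OF g conv01[OF a b t] conv01[OF a b s]])
  also have "\<bar>(a + t * (b - a)) - (a + s * (b - a))\<bar> = \<bar>t - s\<bar> * \<bar>a - b\<bar>"
    by (simp add: abs_mult[symmetric] algebra_simps)
  also have "\<delta> (g (a + 0 * (b - a))) (g (a + 1 * (b - a))) = \<bar>a - b\<bar> * \<delta> (g 0) (g 1)"
    using geod_dist[OF g a b] by simp
  ultimately show "\<delta> (g (a + t * (b - a))) (g (a + s * (b - a))) = \<bar>t - s\<bar> * \<delta> (g (a + 0 * (b - a))) (g (a + 1 * (b - a)))"
    by simp
qed

lemma rev_tri:
  assumes "Metric_space X \<delta>" "y \<in> X" "a \<in> X" "b \<in> X"
  shows "\<bar>\<delta> y a - \<delta> y b\<bar> \<le> \<delta> a b"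
proof -
  have "\<delta> y a \<le> \<delta> y b + \<delta> b a" "\<delta> y b \<le> \<delta> y a + \<delta> a b" "\<delta> a b = \<delta> b a"
    using assms by (auto intro: Metric_space.triangle Metric_space.commute)
  then show ?thesis by linarith
qed

lemma geod_argmin:
  assumes m: "Metric_space X \<delta>" and g: "geodesic X \<delta> g" and y: "y \<in> X"
  shows "\<exists>\<sigma>\<in>{0..1}. \<forall>r\<in>{0..1}. \<delta> y (g \<sigma>) \<le> \<delta> y (g r)"
proof (rule continuous_attains_inf)
  show "compact {0..1::real}" by simp
  show "{0..1::real} \<noteq> {}" by simp
  define L where "L = \<delta> (g 0) (g 1)"
  have L0: "0 \<le> L" unfolding L_def using m by (simp add: Metric_space.nonneg)
  show "continuous_on {0..1} (\<lambda>r. \<delta> y (g r))"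
    unfolding continuous_on_iff
  proof (intro ballI allI impI)
    fix r0 e :: real assume r0: "r0 \<in> {0..1}" and e: "0 < e"
    show "\<exists>d>0. \<forall>r'\<in>{0..1}. dist r' r0 < d \<longrightarrow> dist (\<delta> y (g r')) (\<delta> y (g r0)) < e"
    proof (intro exI[of _ "e / (L + 1)"] conjI ballI impI)
      show "0 < e / (L + 1)" using e L0 by simp
      fix r' :: real assume r': "r' \<in> {0..1}" and lt: "dist r' r0 < e / (L + 1)"
      have "dist (\<delta> y (g r')) (\<delta> y (g r0)) \<le> \<delta> (g r') (g r0)"
        unfolding dist_real_def by (rule rev_tri[OF m y geod_mem[OF g r'] geod_mem[OF g r0]])
      also have "\<dots> = \<bar>r' - r0\<bar> * L" unfolding L_def by (rule geod_dist[OF g r' r0])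
      also have "\<dots> \<le> \<bar>r' - r0\<bar> * (L + 1)" using L0 by (simp add: mult_left_mono)
      also have "\<dots> < e" using lt L0 by (simp add: dist_real_def pos_less_divide_eq)
      finally show "dist (\<delta> y (g r')) (\<delta> y (g r0)) < e" .
    qed
  qed
qed

lemma step:
  assumes gs: "geodesic_space X \<delta>" and so: "SO X \<delta>" and g: "geodesic X \<delta> g"
    and y: "y \<in> X" and sig: "\<sigma> \<in> {0..1}"
    and mn: "\<forall>r\<in>{0..1}. \<delta> y (g \<sigma>) \<le> \<delta> y (g r)" and s: "s \<in> {0..1}"
  shows "\<delta> (g \<sigma>) (g (\<sigma> + s * (1 - \<sigma>))) \<le> \<delta> y (g (\<sigma> + s * (1 - \<sigma>)))"
proof -
  have m: "Metric_space X \<delta>" using gs by (simp add: geodesic_space_def)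
  define b where "b = (\<lambda>v. g (\<sigma> + v * (1 - \<sigma>)))"
  have one: "(1::real) \<in> {0..1}" by simp
  have gb: "geodesic X \<delta> b" unfolding b_def using sub_geod[OF g sig one] by simp
  have b0: "b 0 = g \<sigma>" by (simp add: b_def)
  obtain c where gc: "geodesic X \<delta> c" and c0: "c 0 = g \<sigma>" and c1: "c 1 = y"
    using gs geod_mem[OF g sig] y unfolding geodesic_space_def by blast
  have "orth \<delta> c b" unfolding orth_def
  proof (intro ballI)
    fix v u :: real assume v: "v \<in> {0..1}" and u: "u \<in> {0..1}"
    define R where "R = \<delta> (c 0) (c 1)"
    have k: "b v \<in> X" by (rule geod_mem[OF gb v])
    have cu: "c u \<in> X" by (rule geod_mem[OF gc u])
    have "\<delta> y (b v) \<le> \<delta> y (c u) + \<delta> (c u) (b v)"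
      using m y k cu by (rule_tac Metric_space.triangle) auto
    moreover have "\<delta> y (c u) = (1 - u) * R"
      using geod_dist[OF gc one u] c1 u unfolding R_def by simp
    moreover have "\<delta> (c 0) (c u) = u * R"
      using geod_dist[OF gc _ u, of 0] u unfolding R_def by simp
    moreover have "R \<le> \<delta> y (b v)"
      unfolding R_def c0 c1 b_def using mn conv01[OF sig one v] m
      by (metis Metric_space.commute)
    ultimately show "\<delta> (c 0) (c u) \<le> \<delta> (b v) (c u)"
      using m by (simp add: Metric_space.commute algebra_simps)
  qed
  then have "orth \<delta> b c"
    using so gb gc c0 b0 unfolding SO_def by metis
  then have "\<delta> (b 0) (b s) \<le> \<delta> (c 1) (b s)"
    unfolding orth_def using s by simp
  then show ?thesis unfolding b_def c1 by simp
qed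




lemma core:
  fixes N :: "nat \<Rightarrow> 'b set" and e :: "nat \<Rightarrow> 'b \<Rightarrow> 'b \<Rightarrow> real"
    and Z :: "'c set" and DD :: "'c \<Rightarrow> 'c \<Rightarrow> real" and adm :: "(nat \<Rightarrow> 'b) set"
    and \<Phi> :: "(nat \<Rightarrow> 'b) \<Rightarrow> 'c"
  assumes U: "ultra \<omega>"
    and geoN: "\<And>n. geodesic_space (N n) (e n)" and soN: "\<And>n. SO (N n) (e n)"
    and ugZ: "uniquely_geodesic Z DD"
    and admN: "\<And>a n. a \<in> adm \<Longrightarrow> a n \<in> N n"
    and Zsurj: "\<And>z. z \<in> Z \<Longrightarrow> \<exists>a\<in>adm. \<Phi> a = z"
    and PhiZ: "\<And>a. a \<in> adm \<Longrightarrow> \<Phi> a \<in> Z"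
    and lim: "\<And>a b. a \<in> adm \<Longrightarrow> b \<in> adm \<Longrightarrow> ((\<lambda>n. e n (a n) (b n)) \<longlongrightarrow> DD (\<Phi> a) (\<Phi> b)) \<omega>"
    and close: "\<And>a b B. a \<in> adm \<Longrightarrow> (\<And>n. b n \<in> N n) \<Longrightarrow> eventually (\<lambda>n. e n (a n) (b n) \<le> B) \<omega> \<Longrightarrow> b \<in> adm"
    and eta: "geodesic Z DD \<eta>" and w: "w \<in> Z"
    and near: "\<And>s. s \<in> {0..1} \<Longrightarrow> DD w (\<eta> 0) \<le> DD w (\<eta> s)"
    and uniq: "\<And>s. s \<in> {0..1} \<Longrightarrow> DD w (\<eta> s) = DD w (\<eta> 0) \<Longrightarrow> \<eta> s = \<eta> 0"
    and s: "s \<in> {0..1}"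
  shows "DD (\<eta> 0) (\<eta> s) \<le> DD w (\<eta> s)"
proof -
  have nb: "\<omega> \<noteq> bot" using U by (simp add: ultra_def)
  have zero1: "(0::real) \<in> {0..1}" and one1: "(1::real) \<in> {0..1}" by auto
  have gsZ: "geodesic_space Z DD" using ugZ by (simp add: uniquely_geodesic_def)
  have mZ: "Metric_space Z DD" using gsZ by (simp add: geodesic_space_def)
  have mN: "\<And>n. Metric_space (N n) (e n)" using geoN by (simp add: geodesic_space_def)
  obtain p where p: "p \<in> adm" "\<Phi> p = \<eta> 0" using Zsurj geod_mem[OF eta zero1] by blast
  obtain a where a: "a \<in> adm" "\<Phi> a = \<eta> 1" using Zsurj geod_mem[OF eta one1] by blast
  obtain wq where wq: "wq \<in> adm" "\<Phi> wq = w" using Zsurj w by blast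
  define Lz where "Lz = DD (\<eta> 0) (\<eta> 1)"
  define L where "L = (\<lambda>n. e n (p n) (a n))"
  have Lt: "(L \<longlongrightarrow> Lz) \<omega>" unfolding L_def Lz_def using lim[OF p(1) a(1)] p a by simp
  have Lev: "eventually (\<lambda>n. L n \<le> Lz + 1) \<omega>"
    using order_tendstoD(2)[OF Lt, of "Lz + 1"] by (auto elim: eventually_mono)
  have "\<forall>n. \<exists>g. geodesic (N n) (e n) g \<and> g 0 = p n \<and> g 1 = a n"
    using geoN admN[OF p(1)] admN[OF a(1)] unfolding geodesic_space_def by blast
  then obtain \<beta> where gb: "\<And>n. geodesic (N n) (e n) (\<beta> n)"
      and b0: "\<And>n. \<beta> n 0 = p n" and b1: "\<And>n. \<beta> n 1 = a n"
    by metis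
  have bd: "\<And>n r r'. r \<in> {0..1} \<Longrightarrow> r' \<in> {0..1} \<Longrightarrow> e n (\<beta> n r) (\<beta> n r') = \<bar>r - r'\<bar> * L n"
    using geod_dist[OF gb] b0 b1 unfolding L_def by simp
  have L0: "\<And>n. 0 \<le> L n" unfolding L_def by (rule Metric_space.nonneg[OF mN])
  have admb: "(\<lambda>n. \<beta> n (r n)) \<in> adm" if r: "\<And>n. r n \<in> {0..1}" for r
  proof (rule close[OF p(1)])
    show "\<beta> n (r n) \<in> N n" for n by (rule geod_mem[OF gb r])
    show "eventually (\<lambda>n. e n (p n) (\<beta> n (r n)) \<le> Lz + 1) \<omega>"
      using Lev
    proof eventually_elim
      case (elim n)
      have "e n (p n) (\<beta> n (r n)) = \<bar>0 - r n\<bar> * L n" using bd[OF zero1 r, of n] b0 by simp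
      also have "\<dots> \<le> L n" using r[of n] L0[of n] by (simp add: mult_left_le_one_le)
      finally show ?case using elim by simp
    qed
  qed
  have limb: "((\<lambda>n. \<bar>r n - r' n\<bar> * L n) \<longlongrightarrow> DD (\<Phi> (\<lambda>n. \<beta> n (r n))) (\<Phi> (\<lambda>n. \<beta> n (r' n)))) \<omega>"
    if r: "\<And>n. r n \<in> {0..1}" and r': "\<And>n. r' n \<in> {0..1}" for r r'
    using lim[OF admb[OF r] admb[OF r']] bd[OF r r'] by simp
  define \<eta>' where "\<eta>' = (\<lambda>r. \<Phi> (\<lambda>n. \<beta> n r))"
  have e'd: "DD (\<eta>' r) (\<eta>' r') = \<bar>r - r'\<bar> * Lz" if r: "r \<in> {0..1}" and r': "r' \<in> {0..1}" for r r'
  proof -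
    have "((\<lambda>n. \<bar>r - r'\<bar> * L n) \<longlongrightarrow> DD (\<eta>' r) (\<eta>' r')) \<omega>"
      using limb[of "\<lambda>_. r" "\<lambda>_. r'"] r r' unfolding \<eta>'_def by simp
    moreover have "((\<lambda>n. \<bar>r - r'\<bar> * L n) \<longlongrightarrow> \<bar>r - r'\<bar> * Lz) \<omega>"
      by (intro tendsto_mult tendsto_const Lt)
    ultimately show ?thesis using tendsto_unique[OF nb] by blast
  qed
  have e'0: "\<eta>' 0 = \<eta> 0" unfolding \<eta>'_def b0 using p by (simp add: fun_eq_iff)
  have e'1: "\<eta>' 1 = \<eta> 1" unfolding \<eta>'_def b1 using a by (simp add: fun_eq_iff)
  have geo': "geodesic Z DD \<eta>'"
    unfolding geodesic_def
  proof (intro conjI ballI)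
    show "\<eta>' ` {0..1} \<subseteq> Z" unfolding \<eta>'_def using PhiZ admb by auto
    fix t s :: real assume "t \<in> {0..1}" "s \<in> {0..1}"
    then show "DD (\<eta>' t) (\<eta>' s) = \<bar>t - s\<bar> * DD (\<eta>' 0) (\<eta>' 1)"
      using e'd e'0 e'1 Lz_def by simp
  qed
  have eqe: "\<And>r. r \<in> {0..1} \<Longrightarrow> \<eta>' r = \<eta> r"
    using ugZ geo' eta e'0 e'1 unfolding uniquely_geodesic_def by blast
  have "\<forall>n. \<exists>\<sigma>\<in>{0..1}. \<forall>r\<in>{0..1}. e n (wq n) (\<beta> n \<sigma>) \<le> e n (wq n) (\<beta> n r)"
    using geod_argmin[OF mN gb admN[OF wq(1)]] by blast
  then obtain \<sigma> where sig: "\<And>n. \<sigma> n \<in> {0..1}"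
    and sigm: "\<And>n. \<forall>r\<in>{0..1}. e n (wq n) (\<beta> n (\<sigma> n)) \<le> e n (wq n) (\<beta> n r)"
    by metis
  define \<sigma>0 where "\<sigma>0 = Lim \<omega> \<sigma>"
  have st: "(\<sigma> \<longlongrightarrow> \<sigma>0) \<omega>"
    unfolding \<sigma>0_def using sig by (intro ultra_real_lim[OF U] always_eventually) auto
  have s0: "\<sigma>0 \<in> {0..1}"
  proof -
    have "0 \<le> \<sigma>0" by (rule tendsto_lowerbound[OF st _ nb]) (use sig in \<open>auto intro: always_eventually\<close>)
    moreover have "\<sigma>0 \<le> 1" by (rule tendsto_upperbound[OF st _ nb]) (use sig in \<open>auto intro: always_eventually\<close>)
    ultimately show ?thesis by simp
  qed
  define q where "q = (\<lambda>n. \<beta> n (\<sigma> n))"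
  have admq: "q \<in> adm" unfolding q_def by (rule admb[OF sig])
  have "((\<lambda>n. \<bar>\<sigma> n - \<sigma>0\<bar> * L n) \<longlongrightarrow> DD (\<Phi> q) (\<eta>' \<sigma>0)) \<omega>"
    using limb[OF sig, of "\<lambda>_. \<sigma>0"] s0 unfolding q_def \<eta>'_def by simp
  moreover have "((\<lambda>n. \<bar>\<sigma> n - \<sigma>0\<bar> * L n) \<longlongrightarrow> \<bar>\<sigma>0 - \<sigma>0\<bar> * Lz) \<omega>"
    by (intro tendsto_intros st Lt)
  ultimately have "DD (\<Phi> q) (\<eta>' \<sigma>0) = 0" using tendsto_unique[OF nb] by fastforce
  then have qe: "\<Phi> q = \<eta> \<sigma>0"
    using Metric_space.zero[OF mZ PhiZ[OF admq] geod_mem[OF eta s0]] eqe[OF s0] by simp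
  have "DD w (\<Phi> q) \<le> DD w (\<eta> 0)"
  proof (rule tendsto_le[OF nb])
    show "((\<lambda>n. e n (wq n) (q n)) \<longlongrightarrow> DD w (\<Phi> q)) \<omega>" using lim[OF wq(1) admq] wq by simp
    show "((\<lambda>n. e n (wq n) (p n)) \<longlongrightarrow> DD w (\<eta> 0)) \<omega>" using lim[OF wq(1) p(1)] wq p by simp
    show "\<forall>\<^sub>F n in \<omega>. e n (wq n) (q n) \<le> e n (wq n) (p n)"
      using sigm b0 zero1 unfolding q_def by (intro always_eventually) metis
  qed
  then have "DD w (\<eta> \<sigma>0) = DD w (\<eta> 0)" using near[OF s0] qe by simp
  then have "\<eta> \<sigma>0 = \<eta> 0" by (rule uniq[OF s0])
  then have "DD (\<eta> 0) (\<eta> \<sigma>0) = 0" using Metric_space.zero[OF mZ geod_mem[OF eta zero1] geod_mem[OF eta s0]] by simp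
  moreover have "DD (\<eta> 0) (\<eta> \<sigma>0) = \<sigma>0 * Lz" using geod_dist[OF eta zero1 s0] s0 unfolding Lz_def by simp
  ultimately have sL: "\<sigma>0 * Lz = 0" by simp
  show ?thesis
  proof (cases "Lz = 0")
    case True
    then have "DD (\<eta> 0) (\<eta> s) = 0" using geod_dist[OF eta zero1 s] unfolding Lz_def by simp
    then show ?thesis using Metric_space.nonneg[OF mZ] by simp
  next
    case False
    then have sz: "\<sigma>0 = 0" using sL by simp
    define rr where "rr = (\<lambda>n. \<sigma> n + s * (1 - \<sigma> n))"
    have rr: "\<And>n. rr n \<in> {0..1}" unfolding rr_def using conv01[OF sig one1 s] by simp
    define b1 where "b1 = (\<lambda>n. \<beta> n (rr n))"
    have admb1: "b1 \<in> adm" unfolding b1_def by (rule admb[OF rr])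
    have "((\<lambda>n. \<bar>rr n - s\<bar> * L n) \<longlongrightarrow> DD (\<Phi> b1) (\<eta>' s)) \<omega>"
      using limb[OF rr, of "\<lambda>_. s"] s unfolding b1_def \<eta>'_def by simp
    moreover have "((\<lambda>n. \<bar>rr n - s\<bar> * L n) \<longlongrightarrow> \<bar>(0 + s * (1 - 0)) - s\<bar> * Lz) \<omega>"
      unfolding rr_def using st sz by (intro tendsto_intros Lt) auto
    ultimately have "DD (\<Phi> b1) (\<eta>' s) = 0" using tendsto_unique[OF nb] by fastforce
    then have b1e: "\<Phi> b1 = \<eta> s"
      using Metric_space.zero[OF mZ PhiZ[OF admb1] geod_mem[OF eta s]] eqe[OF s] by simp
    have qe0: "\<Phi> q = \<eta> 0" using qe sz by simp
    show ?thesis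
    proof (rule tendsto_le[OF nb])
      show "((\<lambda>n. e n (wq n) (b1 n)) \<longlongrightarrow> DD w (\<eta> s)) \<omega>" using lim[OF wq(1) admb1] wq b1e by simp
      show "((\<lambda>n. e n (q n) (b1 n)) \<longlongrightarrow> DD (\<eta> 0) (\<eta> s)) \<omega>" using lim[OF admq admb1] qe0 b1e by simp
      show "\<forall>\<^sub>F n in \<omega>. e n (q n) (b1 n) \<le> e n (wq n) (b1 n)"
      proof (intro always_eventually allI)
        fix n
        show "e n (q n) (b1 n) \<le> e n (wq n) (b1 n)"
          unfolding q_def b1_def rr_def
          by (rule step[OF geoN soN gb admN[OF wq(1)] sig sigm s])
      qed
    qed
  qed
qed




lemma ug_eq:
  assumes "uniquely_geodesic Z DD" "geodesic Z DD g" "geodesic Z DD h" "g 0 = h 0" "g 1 = h 1" "t \<in> {0..1}"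
  shows "g t = h t"
proof -
  have "\<forall>\<gamma> \<eta>. geodesic Z DD \<gamma> \<and> geodesic Z DD \<eta> \<and> \<gamma> 0 = \<eta> 0 \<and> \<gamma> 1 = \<eta> 1
        \<longrightarrow> (\<forall>t\<in>{0..1}. \<gamma> t = \<eta> t)" using assms(1) unfolding uniquely_geodesic_def by (rule conjunct2)
  then show ?thesis by (rule allE[of _ g], rule allE[of _ h]) (use assms(2-6) in blast)
qed

lemma geod_image_convex:
  assumes ug: "uniquely_geodesic Z DD" and eta: "geodesic Z DD \<eta>"
  shows "convex_set Z DD (\<eta> ` {0..1})"
  unfolding convex_set_def
proof (intro conjI allI impI)
  show "\<eta> ` {0..1} \<subseteq> Z" using eta by (simp add: geodesic_def)
  fix \<zeta> assume h: "geodesic Z DD \<zeta> \<and> \<zeta> 0 \<in> \<eta> ` {0..1} \<and> \<zeta> 1 \<in> \<eta> ` {0..1}"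
  then obtain a b where a: "a \<in> {0..1}" "\<zeta> 0 = \<eta> a" and b: "b \<in> {0..1}" "\<zeta> 1 = \<eta> b" by blast
  have g: "geodesic Z DD (\<lambda>v. \<eta> (a + v * (b - a)))" by (rule sub_geod[OF eta a(1) b(1)])
  have "\<forall>t\<in>{0..1}. \<zeta> t = \<eta> (a + t * (b - a))"
  proof
    fix t :: real assume t: "t \<in> {0..1}"
    show "\<zeta> t = \<eta> (a + t * (b - a))"
      using ug_eq[OF ug _ g _ _ t, of \<zeta>] h a b by simp
  qed
  then show "\<zeta> ` {0..1} \<subseteq> \<eta> ` {0..1}" using conv01[OF a(1) b(1)] by auto
qed

lemma geod_image_compact:
  assumes m: "Metric_space Z DD" and eta: "geodesic Z DD \<eta>"
  shows "compactin (Metric_space.mtopology Z DD) (\<eta> ` {0..1})"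
proof (rule image_compactin)
  show "compactin (top_of_set {0..1}) {0..1::real}"
    by (rule compact_imp_compactin_subtopology) (auto simp: compactin_euclidean_iff)
  define L where "L = DD (\<eta> 0) (\<eta> 1)"
  have L0: "0 \<le> L" unfolding L_def by (rule Metric_space.nonneg[OF m])
  show "continuous_map (top_of_set {0..1}) (Metric_space.mtopology Z DD) \<eta>"
    unfolding Metric_space.continuous_map_to_metric[OF m]
  proof (intro ballI allI impI)
    fix r e :: real assume r: "r \<in> topspace (top_of_set {0..1})" and e: "0 < e"
    then have r': "r \<in> {0..1}" by simp
    show "\<exists>U. openin (top_of_set {0..1}) U \<and> r \<in> U \<and> (\<forall>y\<in>U. \<eta> y \<in> Metric_space.mball Z DD (\<eta> r) e)"
    proof (intro exI conjI ballI)
      show "openin (top_of_set {0..1}) (ball r (e / (L + 1)) \<inter> {0..1})"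
        by (rule openin_subtopology_Int) (simp add: open_openin[symmetric])
      show "r \<in> ball r (e / (L + 1)) \<inter> {0..1}" using r' e L0 by simp
      fix y assume y: "y \<in> ball r (e / (L + 1)) \<inter> {0..1}"
      then have y': "y \<in> {0..1}" and lt: "\<bar>r - y\<bar> < e / (L + 1)" by (auto simp: dist_real_def)
      have "DD (\<eta> r) (\<eta> y) = \<bar>r - y\<bar> * L" unfolding L_def by (rule geod_dist[OF eta r' y'])
      also have "\<dots> \<le> \<bar>r - y\<bar> * (L + 1)" by (simp add: mult_left_mono)
      also have "\<dots> < e" using lt L0 by (simp add: pos_less_divide_eq)
      finally show "\<eta> y \<in> Metric_space.mball Z DD (\<eta> r) e"
        using geod_mem[OF eta r'] geod_mem[OF eta y'] by (simp add: Metric_space.in_mball[OF m])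
    qed
  qed
qed

lemma proj_uniq:
  assumes ug: "uniquely_geodesic Z DD" and pr: "unique_projections Z DD"
    and eta: "geodesic Z DD \<eta>" and w: "w \<in> Z"
    and near: "\<And>s. s \<in> {0..1} \<Longrightarrow> DD w (\<eta> 0) \<le> DD w (\<eta> s)"
    and s: "s \<in> {0..1}" and eq: "DD w (\<eta> s) = DD w (\<eta> 0)"
  shows "\<eta> s = \<eta> 0"
proof -
  have m: "Metric_space Z DD" using ug by (simp add: uniquely_geodesic_def geodesic_space_def)
  let ?K = "\<eta> ` {0..1}"
  have ne: "?K \<noteq> {}" by simp
  have allK: "\<forall>K. K \<noteq> {} \<and> compactin (Metric_space.mtopology Z DD) K \<and> convex_set Z DD K \<longrightarrow>
        (\<forall>p\<in>Z. \<exists>!q. q \<in> K \<and> (\<forall>k\<in>K. DD p q \<le> DD p k))"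
    using pr by (simp only: unique_projections_def)
  then have imp: "?K \<noteq> {} \<and> compactin (Metric_space.mtopology Z DD) ?K \<and> convex_set Z DD ?K \<longrightarrow>
        (\<forall>p\<in>Z. \<exists>!q. q \<in> ?K \<and> (\<forall>k\<in>?K. DD p q \<le> DD p k))"
    by (rule allE)
  have "\<forall>p\<in>Z. \<exists>!q. q \<in> ?K \<and> (\<forall>k\<in>?K. DD p q \<le> DD p k)"
    by (rule mp[OF imp]) (intro conjI ne geod_image_compact[OF m eta] geod_image_convex[OF ug eta])
  then have ex: "\<exists>!q. q \<in> ?K \<and> (\<forall>k\<in>?K. DD w q \<le> DD w k)"
    using w by (rule bspec)
  have P0: "\<eta> 0 \<in> ?K \<and> (\<forall>k\<in>?K. DD w (\<eta> 0) \<le> DD w k)" using near by auto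
  have Ps: "\<eta> s \<in> ?K \<and> (\<forall>k\<in>?K. DD w (\<eta> s) \<le> DD w k)" using near s eq by auto
  from ex obtain q where q: "\<forall>y. y \<in> ?K \<and> (\<forall>k\<in>?K. DD w y \<le> DD w k) \<longrightarrow> y = q"
    by (elim ex1E) blast
  have "\<eta> 0 = q" by (rule q[rule_format, OF P0])
  moreover have "\<eta> s = q" by (rule q[rule_format, OF Ps])
  ultimately show ?thesis by simp
qed

context ULset
begin

lemma core_UL:
  assumes geoN: "\<And>n. geodesic_space (M n) (d n)" and soN: "\<And>n. SO (M n) (d n)"
    and ug: "uniquely_geodesic (UL_space \<omega> M d x) (UL_dist \<omega> d)"
    and eta: "geodesic (UL_space \<omega> M d x) (UL_dist \<omega> d) \<eta>" and w: "w \<in> UL_space \<omega> M d x"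
    and near: "\<And>s. s \<in> {0..1} \<Longrightarrow> UL_dist \<omega> d w (\<eta> 0) \<le> UL_dist \<omega> d w (\<eta> s)"
    and uniq: "\<And>s. s \<in> {0..1} \<Longrightarrow> UL_dist \<omega> d w (\<eta> s) = UL_dist \<omega> d w (\<eta> 0) \<Longrightarrow> \<eta> s = \<eta> 0"
    and s: "s \<in> {0..1}"
  shows "UL_dist \<omega> d (\<eta> 0) (\<eta> s) \<le> UL_dist \<omega> d w (\<eta> s)"
proof (rule core[OF U geoN soN ug _ _ _ _ _ eta w near uniq s, where adm = S and \<Phi> = cls])
  show "\<And>a n. a \<in> S \<Longrightarrow> a n \<in> M n" by (rule seqs_mem)
  show "\<And>z. z \<in> UL_space \<omega> M d x \<Longrightarrow> \<exists>a\<in>S. cls a = z" by (auto simp: space_eq)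
  show "\<And>a. a \<in> S \<Longrightarrow> cls a \<in> UL_space \<omega> M d x" by (auto simp: space_eq)
  show "\<And>a b. a \<in> S \<Longrightarrow> b \<in> S \<Longrightarrow> ((\<lambda>n. d n (a n) (b n)) \<longlongrightarrow> UL_dist \<omega> d (cls a) (cls b)) \<omega>"
    by (rule lim_cls)
  show "\<And>a b B. a \<in> S \<Longrightarrow> (\<And>n. b n \<in> M n) \<Longrightarrow> \<forall>\<^sub>F n in \<omega>. d n (a n) (b n) \<le> B \<Longrightarrow> b \<in> S"
    by (rule close)
qed

lemma SO_UL:
  assumes geoN: "\<And>n. geodesic_space (M n) (d n)" and soN: "\<And>n. SO (M n) (d n)"
    and ug: "uniquely_geodesic (UL_space \<omega> M d x) (UL_dist \<omega> d)"
    and pr: "unique_projections (UL_space \<omega> M d x) (UL_dist \<omega> d)"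
  shows "SO (UL_space \<omega> M d x) (UL_dist \<omega> d)"
  unfolding SO_def
proof (intro allI impI)
  let ?Z = "UL_space \<omega> M d x" and ?D = "UL_dist \<omega> d"
  have m: "Metric_space ?Z ?D" using ug by (simp add: uniquely_geodesic_def geodesic_space_def)
  fix \<gamma> \<eta> assume h: "geodesic ?Z ?D \<gamma> \<and> geodesic ?Z ?D \<eta> \<and> \<gamma> 0 = \<eta> 0 \<and> orth ?D \<gamma> \<eta>"
  then have g: "geodesic ?Z ?D \<gamma>" and eta: "geodesic ?Z ?D \<eta>" and e0: "\<gamma> 0 = \<eta> 0"
    and o: "orth ?D \<gamma> \<eta>" by auto
  show "orth ?D \<eta> \<gamma>" unfolding orth_def
  proof (intro ballI)
    fix s t :: real assume t: "t \<in> {0..1}" and s: "s \<in> {0..1}"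
    have w: "\<gamma> t \<in> ?Z" by (rule geod_mem[OF g t])
    have near: "?D (\<gamma> t) (\<eta> 0) \<le> ?D (\<gamma> t) (\<eta> s')" if s': "s' \<in> {0..1}" for s'
    proof -
      have "?D (\<gamma> 0) (\<gamma> t) \<le> ?D (\<eta> s') (\<gamma> t)" using o s' t unfolding orth_def by blast
      moreover have "?D (\<eta> 0) (\<gamma> t) = ?D (\<gamma> t) (\<eta> 0)" by (rule Metric_space.commute[OF m])
      moreover have "?D (\<eta> s') (\<gamma> t) = ?D (\<gamma> t) (\<eta> s')" by (rule Metric_space.commute[OF m])
      ultimately show ?thesis using e0 by simp
    qed
    have uq: "\<eta> s' = \<eta> 0" if "s' \<in> {0..1}" "?D (\<gamma> t) (\<eta> s') = ?D (\<gamma> t) (\<eta> 0)" for s'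
      by (rule proj_uniq[OF ug pr eta w near that])
    show "?D (\<eta> 0) (\<eta> s) \<le> ?D (\<gamma> t) (\<eta> s)"
      by (rule core_UL[OF geoN soN ug eta w near uq s])
  qed
qed

end



lemma prod_l2_eq: "prod_l2 D a b = sqrt ((D (fst a) (fst b))\<^sup>2 + (snd a - snd b)\<^sup>2)"
  by (simp add: prod_l2_def)

lemma mink: "sqrt ((a1 + a2)\<^sup>2 + (b1 + b2)\<^sup>2) \<le> sqrt (a1\<^sup>2 + b1\<^sup>2) + sqrt (a2\<^sup>2 + b2\<^sup>2)"
proof -
  have "cmod (Complex a1 b1 + Complex a2 b2) \<le> cmod (Complex a1 b1) + cmod (Complex a2 b2)"
    by (rule norm_triangle_ineq)
  moreover have "Complex a1 b1 + Complex a2 b2 = Complex (a1 + a2) (b1 + b2)" by (simp add: complex_eq_iff)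
  ultimately show ?thesis by (simp add: complex_norm)
qed

lemma sqrt_mono2:
  assumes "0 \<le> a" "a \<le> a'" "\<bar>c\<bar> \<le> \<bar>c'\<bar>"
  shows "sqrt (a\<^sup>2 + c\<^sup>2) \<le> sqrt (a'\<^sup>2 + c'\<^sup>2)"
proof -
  have "a\<^sup>2 \<le> a'\<^sup>2" using assms by (simp add: power_mono)
  moreover have "c\<^sup>2 \<le> c'\<^sup>2" using power_mono[OF assms(3) abs_ge_zero, of 2] by simp
  ultimately show ?thesis by simp
qed

lemma prod_metric:
  assumes m: "Metric_space Z D"
  shows "Metric_space (Z \<times> (UNIV::real set)) (prod_l2 D)"
proof
  fix x y :: "'a \<times> real"
  show "0 \<le> prod_l2 D x y" by (simp add: prod_l2_def)
  show "prod_l2 D x y = prod_l2 D y x"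
    unfolding prod_l2_eq using Metric_space.commute[OF m, of "fst x" "fst y"]
    by (simp add: power2_commute)
next
  fix x y :: "'a \<times> real"
  assume x: "x \<in> Z \<times> UNIV" and y: "y \<in> Z \<times> UNIV"
  have "prod_l2 D x y = 0 \<longleftrightarrow> D (fst x) (fst y) = 0 \<and> snd x = snd y"
    unfolding prod_l2_eq by (simp add: add_nonneg_eq_0_iff)
  also have "\<dots> \<longleftrightarrow> x = y"
    using Metric_space.zero[OF m, of "fst x" "fst y"] x y by (auto simp: prod_eq_iff)
  finally show "prod_l2 D x y = 0 \<longleftrightarrow> x = y" .
next
  fix x y z :: "'a \<times> real"
  assume x: "x \<in> Z \<times> UNIV" and y: "y \<in> Z \<times> UNIV" and z: "z \<in> Z \<times> UNIV"
  have t: "D (fst x) (fst z) \<le> D (fst x) (fst y) + D (fst y) (fst z)"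
    using x y z by (intro Metric_space.triangle[OF m]) auto
  have "prod_l2 D x z \<le> sqrt ((D (fst x) (fst y) + D (fst y) (fst z))\<^sup>2 + ((snd x - snd y) + (snd y - snd z))\<^sup>2)"
    unfolding prod_l2_eq using t Metric_space.nonneg[OF m]
    by (intro sqrt_mono2) auto
  also have "\<dots> \<le> prod_l2 D x y + prod_l2 D y z" unfolding prod_l2_eq by (rule mink)
  finally show "prod_l2 D x z \<le> prod_l2 D x y + prod_l2 D y z" .
qed

lemma alg3:
  fixes a b c e A C r1 r2 R :: real
  assumes "r1\<^sup>2 = a\<^sup>2 + c\<^sup>2" "r2\<^sup>2 = b\<^sup>2 + e\<^sup>2" "R = r1 + r2" "A = a + b" "C = c + e"
    "r1 * r2 = a * b + c * e"
  shows "(a * R - r1 * A)\<^sup>2 + (c * R - r1 * C)\<^sup>2 = 0"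
  using assms by algebra

lemma three_point:
  assumes m: "Metric_space Z D" and x: "fst x \<in> Z" and y: "fst y \<in> Z" and u: "fst u \<in> Z"
    and eq: "prod_l2 D x y + prod_l2 D y u = prod_l2 D x u"
  shows "D (fst x) (fst u) = D (fst x) (fst y) + D (fst y) (fst u)"
    and "D (fst x) (fst y) * prod_l2 D x u = prod_l2 D x y * D (fst x) (fst u)"
    and "(snd y - snd x) * prod_l2 D x u = prod_l2 D x y * (snd u - snd x)"
proof -
  define a where "a = D (fst x) (fst y)"
  define b where "b = D (fst y) (fst u)"
  define A where "A = D (fst x) (fst u)"
  define c where "c = snd y - snd x"
  define e where "e = snd u - snd y"
  define C where "C = snd u - snd x"
  define r1 where "r1 = prod_l2 D x y"
  define r2 where "r2 = prod_l2 D y u"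
  define R where "R = prod_l2 D x u"
  have a0: "0 \<le> a" and b0: "0 \<le> b" and A0: "0 \<le> A"
    unfolding a_def b_def A_def by (auto intro: Metric_space.nonneg[OF m])
  have Aab: "A \<le> a + b" unfolding A_def a_def b_def by (rule Metric_space.triangle[OF m x y u])
  have Cce: "C = c + e" unfolding C_def c_def e_def by simp
  have r1d: "r1 = sqrt (a\<^sup>2 + c\<^sup>2)" unfolding r1_def a_def c_def prod_l2_eq by (simp add: power2_commute)
  have r2d: "r2 = sqrt (b\<^sup>2 + e\<^sup>2)" unfolding r2_def b_def e_def prod_l2_eq by (simp add: power2_commute)
  have Rd: "R = sqrt (A\<^sup>2 + C\<^sup>2)" unfolding R_def A_def C_def prod_l2_eq by (simp add: power2_commute)
  have RR: "R = r1 + r2" using eq unfolding R_def r1_def r2_def by simp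
  have s1: "r1\<^sup>2 = a\<^sup>2 + c\<^sup>2" unfolding r1d by simp
  have s2: "r2\<^sup>2 = b\<^sup>2 + e\<^sup>2" unfolding r2d by simp
  have sR: "R\<^sup>2 = A\<^sup>2 + C\<^sup>2" unfolding Rd by simp
  have r10: "0 \<le> r1" and r20: "0 \<le> r2" unfolding r1d r2d by auto
  have le1: "R \<le> sqrt ((a + b)\<^sup>2 + C\<^sup>2)" unfolding Rd using A0 Aab by (intro sqrt_mono2) auto
  have le2: "sqrt ((a + b)\<^sup>2 + C\<^sup>2) \<le> r1 + r2" unfolding r1d r2d Cce by (rule mink)
  have eqs: "sqrt ((a + b)\<^sup>2 + C\<^sup>2) = R" using le1 le2 RR by simp
  then have "(a + b)\<^sup>2 + C\<^sup>2 = A\<^sup>2 + C\<^sup>2" using sR by (metis real_sqrt_ge_zero real_sqrt_pow2 sum_power2_ge_zero)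
  then have "(a + b)\<^sup>2 = A\<^sup>2" by simp
  then have AE: "A = a + b" using A0 a0 b0 by (simp add: power2_eq_iff_nonneg)
  then show "D (fst x) (fst u) = D (fst x) (fst y) + D (fst y) (fst u)" unfolding A_def a_def b_def .
  have "(r1 + r2)\<^sup>2 = (a + b)\<^sup>2 + (c + e)\<^sup>2" using sR RR AE Cce by simp
  then have pr: "r1 * r2 = a * b + c * e" using s1 s2 by (simp add: power2_eq_square algebra_simps)
  have "(a * R - r1 * A)\<^sup>2 + (c * R - r1 * C)\<^sup>2 = 0" by (rule alg3[OF s1 s2 RR AE Cce pr])
  then have "a * R = r1 * A" "c * R = r1 * C" by (simp_all add: add_nonneg_eq_0_iff)
  then show "D (fst x) (fst y) * prod_l2 D x u = prod_l2 D x y * D (fst x) (fst u)"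
    and "(snd y - snd x) * prod_l2 D x u = prod_l2 D x y * (snd u - snd x)"
    unfolding a_def R_def r1_def A_def c_def C_def by simp_all
qed




lemma geod_split:
  assumes m: "Metric_space Z D" and g: "geodesic (Z \<times> (UNIV::real set)) (prod_l2 D) \<zeta>"
  shows "geodesic Z D (\<lambda>r. fst (\<zeta> r))"
    and "\<And>r. r \<in> {0..1} \<Longrightarrow> snd (\<zeta> r) = snd (\<zeta> 0) + r * (snd (\<zeta> 1) - snd (\<zeta> 0))"
proof -
  have mP: "Metric_space (Z \<times> (UNIV::real set)) (prod_l2 D)" by (rule prod_metric[OF m])
  have z1: "(0::real) \<in> {0..1}" "(1::real) \<in> {0..1}" by auto
  define R where "R = prod_l2 D (\<zeta> 0) (\<zeta> 1)"
  define A where "A = D (fst (\<zeta> 0)) (fst (\<zeta> 1))"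
  have mem: "fst (\<zeta> r) \<in> Z" if "r \<in> {0..1}" for r using geod_mem[OF g that] by (simp add: mem_Times_iff)
  have pd: "prod_l2 D (\<zeta> r) (\<zeta> r') = \<bar>r - r'\<bar> * R" if "r \<in> {0..1}" "r' \<in> {0..1}" for r r'
    unfolding R_def by (rule geod_dist[OF g that])
  have R0: "0 \<le> R" unfolding R_def by (simp add: prod_l2_def)
  have H: "geodesic Z D (\<lambda>r. fst (\<zeta> r)) \<and> (\<forall>r\<in>{0..1}. snd (\<zeta> r) = snd (\<zeta> 0) + r * (snd (\<zeta> 1) - snd (\<zeta> 0)))"
  proof (cases "R = 0")
    case True
    have const: "\<zeta> r = \<zeta> 0" if r: "r \<in> {0..1}" for r
    proof -
      have "prod_l2 D (\<zeta> r) (\<zeta> 0) = 0" using pd[OF r z1(1)] True by simp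
      then show ?thesis using Metric_space.zero[OF mP geod_mem[OF g r] geod_mem[OF g z1(1)]] by simp
    qed
    show ?thesis unfolding geodesic_def
    proof (intro conjI ballI)
      show "(\<lambda>r. fst (\<zeta> r)) ` {0..1} \<subseteq> Z" using mem by auto
      fix t s :: real assume t: "t \<in> {0..1}" and s: "s \<in> {0..1}"
      show "D (fst (\<zeta> t)) (fst (\<zeta> s)) = \<bar>t - s\<bar> * D (fst (\<zeta> 0)) (fst (\<zeta> 1))"
        using const[OF t] const[OF s] const[OF z1(2)] Metric_space.mdist_zero[OF m mem[OF z1(1)]] by simp
    next
      fix r :: real assume r: "r \<in> {0..1}"
      show "snd (\<zeta> r) = snd (\<zeta> 0) + r * (snd (\<zeta> 1) - snd (\<zeta> 0))"
        using const[OF r] const[OF z1(2)] by simp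
    qed
  next
    case False
    then have Rp: "0 < R" using R0 by simp
    have tp: "D (fst (\<zeta> 0)) (fst (\<zeta> r)) = r * A \<and> snd (\<zeta> r) - snd (\<zeta> 0) = r * (snd (\<zeta> 1) - snd (\<zeta> 0))"
      if r: "r \<in> {0..1}" for r
    proof -
      have eq: "prod_l2 D (\<zeta> 0) (\<zeta> r) + prod_l2 D (\<zeta> r) (\<zeta> 1) = prod_l2 D (\<zeta> 0) (\<zeta> 1)"
        using pd[OF z1(1) r] pd[OF r z1(2)] r unfolding R_def[symmetric] by (simp add: algebra_simps)
      have e0r: "prod_l2 D (\<zeta> 0) (\<zeta> r) = r * R" using pd[OF z1(1) r] r by simp
      have "D (fst (\<zeta> 0)) (fst (\<zeta> r)) * R = (r * R) * A"
        using three_point(2)[OF m mem[OF z1(1)] mem[OF r] mem[OF z1(2)] eq] e0r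
        unfolding R_def[symmetric] A_def[symmetric] by simp
      then have "D (fst (\<zeta> 0)) (fst (\<zeta> r)) * R = (r * A) * R" by (simp only: ac_simps)
      then have h1: "D (fst (\<zeta> 0)) (fst (\<zeta> r)) = r * A" using Rp by simp
      have "(snd (\<zeta> r) - snd (\<zeta> 0)) * R = (r * R) * (snd (\<zeta> 1) - snd (\<zeta> 0))"
        using three_point(3)[OF m mem[OF z1(1)] mem[OF r] mem[OF z1(2)] eq] e0r
        unfolding R_def[symmetric] by simp
      then have "(snd (\<zeta> r) - snd (\<zeta> 0)) * R = (r * (snd (\<zeta> 1) - snd (\<zeta> 0))) * R" by (simp only: ac_simps)
      then have h2: "snd (\<zeta> r) - snd (\<zeta> 0) = r * (snd (\<zeta> 1) - snd (\<zeta> 0))" using Rp by simp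
      show ?thesis using h1 h2 by blast
    qed
    have le: "D (fst (\<zeta> t)) (fst (\<zeta> s)) = (s - t) * A" if t: "t \<in> {0..1}" and s: "s \<in> {0..1}" and ts: "t \<le> s" for t s
    proof -
      have eq: "prod_l2 D (\<zeta> 0) (\<zeta> t) + prod_l2 D (\<zeta> t) (\<zeta> s) = prod_l2 D (\<zeta> 0) (\<zeta> s)"
        using pd[OF z1(1) t] pd[OF t s] pd[OF z1(1) s] t s ts by (simp add: algebra_simps)
      have "D (fst (\<zeta> 0)) (fst (\<zeta> s)) = D (fst (\<zeta> 0)) (fst (\<zeta> t)) + D (fst (\<zeta> t)) (fst (\<zeta> s))"
        by (rule three_point(1)[OF m mem[OF z1(1)] mem[OF t] mem[OF s] eq])
      then show ?thesis using tp[OF t] tp[OF s] by (simp add: algebra_simps)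
    qed
    show ?thesis unfolding geodesic_def
    proof (intro conjI ballI)
      show "(\<lambda>r. fst (\<zeta> r)) ` {0..1} \<subseteq> Z" using mem by auto
      fix t s :: real assume t: "t \<in> {0..1}" and s: "s \<in> {0..1}"
      have A1: "D (fst (\<zeta> 0)) (fst (\<zeta> 1)) = A" by (simp add: A_def)
      show "D (fst (\<zeta> t)) (fst (\<zeta> s)) = \<bar>t - s\<bar> * D (fst (\<zeta> 0)) (fst (\<zeta> 1))"
      proof (cases "t \<le> s")
        case True then show ?thesis using le[OF t s] A1 by simp
      next
        case False
        then have "D (fst (\<zeta> s)) (fst (\<zeta> t)) = (t - s) * A" using le[OF s t] by simp
        then show ?thesis using False A1 Metric_space.commute[OF m, of "fst (\<zeta> s)" "fst (\<zeta> t)"] by simp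
      qed
    next
      fix r :: real assume r: "r \<in> {0..1}"
      show "snd (\<zeta> r) = snd (\<zeta> 0) + r * (snd (\<zeta> 1) - snd (\<zeta> 0))" using tp[OF r] by simp
    qed
  qed
  then show "geodesic Z D (\<lambda>r. fst (\<zeta> r))" by (rule conjunct1)
  show "\<And>r. r \<in> {0..1} \<Longrightarrow> snd (\<zeta> r) = snd (\<zeta> 0) + r * (snd (\<zeta> 1) - snd (\<zeta> 0))"
    using H by blast
qed

lemma prod_geodesic_space:
  assumes gs: "geodesic_space Z D"
  shows "geodesic_space (Z \<times> (UNIV::real set)) (prod_l2 D)"
  unfolding geodesic_space_def
proof (intro conjI ballI)
  have m: "Metric_space Z D" using gs by (simp add: geodesic_space_def)
  show "Metric_space (Z \<times> (UNIV::real set)) (prod_l2 D)" by (rule prod_metric[OF m])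
  fix p q :: "'a \<times> real" assume p: "p \<in> Z \<times> UNIV" and q: "q \<in> Z \<times> UNIV"
  obtain g where g: "geodesic Z D g" "g 0 = fst p" "g 1 = fst q"
    using gs p q unfolding geodesic_space_def by (auto simp: mem_Times_iff)
  define h where "h = (\<lambda>r. (g r, snd p + r * (snd q - snd p)))"
  have "geodesic (Z \<times> UNIV) (prod_l2 D) h"
    unfolding geodesic_def
  proof (intro conjI ballI)
    show "h ` {0..1} \<subseteq> Z \<times> UNIV" unfolding h_def using geod_mem[OF g(1)] by auto
    fix t s :: real assume t: "t \<in> {0..1}" and s: "s \<in> {0..1}"
    define A where "A = D (g 0) (g 1)"
    define c where "c = snd q - snd p"
    have "prod_l2 D (h t) (h s) = sqrt ((\<bar>t - s\<bar> * A)\<^sup>2 + ((t - s) * c)\<^sup>2)"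
      unfolding h_def prod_l2_eq A_def c_def using geod_dist[OF g(1) t s] by (simp add: algebra_simps)
    also have "\<dots> = sqrt ((t - s)\<^sup>2 * (A\<^sup>2 + c\<^sup>2))" by (simp only: power_mult_distrib power2_abs distrib_left)
    also have "\<dots> = \<bar>t - s\<bar> * sqrt (A\<^sup>2 + c\<^sup>2)" by (simp add: real_sqrt_mult)
    also have "sqrt (A\<^sup>2 + c\<^sup>2) = prod_l2 D (h 0) (h 1)"
      unfolding h_def prod_l2_eq A_def c_def by (simp add: power2_commute)
    finally show "prod_l2 D (h t) (h s) = \<bar>t - s\<bar> * prod_l2 D (h 0) (h 1)" .
  qed
  moreover have "h 0 = p" "h 1 = q" unfolding h_def using g by (auto simp: prod_eq_iff)
  ultimately show "\<exists>\<gamma>. geodesic (Z \<times> UNIV) (prod_l2 D) \<gamma> \<and> \<gamma> 0 = p \<and> \<gamma> 1 = q" by blast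
qed

lemma prod_ug:
  assumes ug: "uniquely_geodesic Z D"
  shows "uniquely_geodesic (Z \<times> (UNIV::real set)) (prod_l2 D)"
  unfolding uniquely_geodesic_def
proof (intro conjI allI impI ballI)
  have gs: "geodesic_space Z D" using ug by (simp add: uniquely_geodesic_def)
  have m: "Metric_space Z D" using gs by (simp add: geodesic_space_def)
  show "geodesic_space (Z \<times> (UNIV::real set)) (prod_l2 D)" by (rule prod_geodesic_space[OF gs])
  fix \<gamma> \<eta> :: "real \<Rightarrow> 'a \<times> real" and t :: real
  assume h: "geodesic (Z \<times> UNIV) (prod_l2 D) \<gamma> \<and> geodesic (Z \<times> UNIV) (prod_l2 D) \<eta> \<and> \<gamma> 0 = \<eta> 0 \<and> \<gamma> 1 = \<eta> 1"
    and t: "t \<in> {0..1}"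
  have g1: "geodesic (Z \<times> UNIV) (prod_l2 D) \<gamma>" and g2: "geodesic (Z \<times> UNIV) (prod_l2 D) \<eta>"
    and e0: "\<gamma> 0 = \<eta> 0" and e1: "\<gamma> 1 = \<eta> 1" using h by auto
  have "fst (\<gamma> t) = fst (\<eta> t)"
    by (rule ug_eq[OF ug geod_split(1)[OF m g1] geod_split(1)[OF m g2] _ _ t]) (simp_all add: e0 e1)
  moreover have "snd (\<gamma> t) = snd (\<eta> t)"
    using geod_split(2)[OF m g1 t] geod_split(2)[OF m g2 t] e0 e1 by simp
  ultimately show "\<gamma> t = \<eta> t" by (simp add: prod_eq_iff)
qed




lemma sq_le:
  assumes h: "sqrt (a\<^sup>2 + c) \<le> sqrt (b\<^sup>2 + c)" and b: "0 \<le> b" shows "a \<le> (b::real)"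
proof -
  have "a\<^sup>2 + c \<le> b\<^sup>2 + c" using h by (simp only: real_sqrt_le_iff)
  then have "a\<^sup>2 \<le> b\<^sup>2" by linarith
  then show ?thesis by (rule power2_le_imp_le[OF _ b])
qed

lemma sq_eq:
  assumes h: "sqrt (a\<^sup>2 + c) = sqrt (b\<^sup>2 + c)" and a: "0 \<le> a" and b: "0 \<le> b" shows "a = (b::real)"
proof -
  have "a\<^sup>2 + c = b\<^sup>2 + c" using h by (simp only: real_sqrt_eq_iff)
  then have "a\<^sup>2 = b\<^sup>2" by linarith
  then show ?thesis using power2_eq_iff_nonneg[OF a b] by blast
qed

lemma prod_uniq:
  fixes \<gamma> \<eta> :: "real \<Rightarrow> 'a \<times> real"
  assumes ug: "uniquely_geodesic Z D" and pr: "unique_projections Z D"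
    and g: "geodesic (Z \<times> UNIV) (prod_l2 D) \<gamma>" and eta: "geodesic (Z \<times> UNIV) (prod_l2 D) \<eta>"
    and e0: "\<gamma> 0 = \<eta> 0" and o: "orth (prod_l2 D) \<gamma> \<eta>"
    and t0: "0 < t" and t1: "t < 1" and s: "s \<in> {0..1}"
    and eq: "prod_l2 D (\<gamma> t) (\<eta> s) = prod_l2 D (\<gamma> t) (\<eta> 0)"
  shows "\<eta> s = \<eta> 0"
proof -
  have m: "Metric_space Z D" using ug by (simp add: uniquely_geodesic_def geodesic_space_def)
  have mP: "Metric_space (Z \<times> (UNIV::real set)) (prod_l2 D)" by (rule prod_metric[OF m])
  have z1: "(0::real) \<in> {0..1}" "(1::real) \<in> {0..1}" by auto
  have tt: "t \<in> {0..1}" using t0 t1 by simp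
  define P where "P = prod_l2 D"
  define p where "p = \<eta> 0"
  define z where "z = \<gamma> 1"
  define w where "w = \<gamma> t"
  define k where "k = \<eta> s"
  define Rg where "Rg = P (\<gamma> 0) (\<gamma> 1)"
  have pm: "p \<in> Z \<times> UNIV" unfolding p_def by (rule geod_mem[OF eta z1(1)])
  have zm: "z \<in> Z \<times> UNIV" unfolding z_def by (rule geod_mem[OF g z1(2)])
  have wm: "w \<in> Z \<times> UNIV" unfolding w_def by (rule geod_mem[OF g tt])
  have km: "k \<in> Z \<times> UNIV" unfolding k_def by (rule geod_mem[OF eta s])
  have Pc: "\<And>a b. P a b = P b a" unfolding P_def by (rule Metric_space.commute[OF mP])
  have pw: "P p w = t * Rg" unfolding p_def w_def Rg_def P_def e0[symmetric]
    using geod_dist[OF g z1(1) tt] t0 by simp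
  have wz: "P w z = (1 - t) * Rg" unfolding z_def w_def Rg_def P_def
    using geod_dist[OF g tt z1(2)] t1 by simp
  have pz: "P p z = Rg" unfolding p_def z_def Rg_def e0 by simp
  have oo: "\<And>a b. a \<in> {0..1} \<Longrightarrow> b \<in> {0..1} \<Longrightarrow> P (\<gamma> 0) (\<gamma> b) \<le> P (\<eta> a) (\<gamma> b)"
    using o unfolding orth_def P_def by blast
  have ozk: "P p z \<le> P k z" using oo[OF s z1(2)] unfolding p_def z_def k_def e0 .
  have tri: "P z k \<le> P z w + P w k" unfolding P_def by (rule Metric_space.triangle[OF mP zm wm km])
  have "P w k = P w p" using eq unfolding P_def w_def k_def p_def .
  then have wk: "P w k = t * Rg" using pw Pc[of w p] by simp
  have zk: "P z k = Rg" using ozk tri wz wk pz Pc[of k z] Pc[of z w] by (simp add: algebra_simps)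
  have eq3: "P z w + P w k = P z k" using zk wz wk Pc[of z w] by (simp add: algebra_simps)
  have eq4: "P z w + P w p = P z p" using pz wz pw Pc[of z w] Pc[of w p] Pc[of z p] by (simp add: algebra_simps)
  have fm: "fst z \<in> Z" "fst w \<in> Z" "fst k \<in> Z" "fst p \<in> Z" using zm wm km pm by auto
  have th1: "(snd w - snd z) * P z k = P z w * (snd k - snd z)"
    using three_point(3)[OF m fm(1) fm(2) fm(3)] eq3 unfolding P_def by blast
  have th2: "(snd w - snd z) * P z p = P z w * (snd p - snd z)"
    using three_point(3)[OF m fm(1) fm(2) fm(4)] eq4 unfolding P_def by blast
  show ?thesis
  proof (cases "Rg = 0")
    case True
    have "P w p = 0" using pw Pc[of w p] True by simp
    then have "w = p" using Metric_space.zero[OF mP wm pm] unfolding P_def by simp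
    moreover have "P w k = 0" using wk True by simp
    then have "w = k" using Metric_space.zero[OF mP wm km] unfolding P_def by simp
    ultimately show ?thesis unfolding k_def p_def by simp
  next
    case False
    have "(1 - t) * Rg * (snd k - snd z) = (1 - t) * Rg * (snd p - snd z)"
      using th1 th2 zk pz wz Pc[of z p] Pc[of z w] by (simp add: algebra_simps)
    moreover have "(1 - t) * Rg \<noteq> 0" using False t1 by simp
    ultimately have sk: "snd k = snd p" by simp
    have sp: "snd (\<eta> r) = snd p + r * (snd (\<eta> 1) - snd p)" if "r \<in> {0..1}" for r
      using geod_split(2)[OF m eta that] unfolding p_def .
    show ?thesis
    proof (cases "snd (\<eta> 1) = snd p")
      case False
      have "s * (snd (\<eta> 1) - snd p) = 0" using sp[OF s] sk unfolding k_def by simp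
      then have "s = 0" using False by simp
      then show ?thesis by simp
    next
      case True
      have const: "snd (\<eta> r) = snd p" if "r \<in> {0..1}" for r using sp[OF that] True by simp
      define h where "h = (\<lambda>r. fst (\<eta> r))"
      have gh: "geodesic Z D h" unfolding h_def by (rule geod_split(1)[OF m eta])
      have Pform: "P (\<eta> r) w = sqrt ((D (h r) (fst w))\<^sup>2 + (snd p - snd w)\<^sup>2)" if "r \<in> {0..1}" for r
        unfolding P_def prod_l2_eq h_def using const[OF that] by simp
      have near: "D (fst w) (h 0) \<le> D (fst w) (h r)" if r: "r \<in> {0..1}" for r
      proof -
        have "P (\<eta> 0) w \<le> P (\<eta> r) w" using oo[OF r tt] e0 unfolding w_def by simp
        then have "D (h 0) (fst w) \<le> D (h r) (fst w)"
          unfolding Pform[OF z1(1)] Pform[OF r]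
          by (rule sq_le) (rule Metric_space.nonneg[OF m])
        then show ?thesis using Metric_space.commute[OF m, of "fst w"] by simp
      qed
      have eqh: "D (fst w) (h s) = D (fst w) (h 0)"
      proof -
        have "P (\<eta> s) w = P (\<eta> 0) w" using eq Pc[of "\<eta> s" w] Pc[of "\<eta> 0" w] unfolding P_def w_def by simp
        then have "D (h s) (fst w) = D (h 0) (fst w)"
          unfolding Pform[OF z1(1)] Pform[OF s]
          by (rule sq_eq) (rule Metric_space.nonneg[OF m])+
        then show ?thesis using Metric_space.commute[OF m, of "fst w"] by simp
      qed
      have "h s = h 0" by (rule proj_uniq[OF ug pr gh fm(2) near s eqh])
      then have "fst k = fst p" unfolding h_def k_def p_def .
      then show ?thesis using sk unfolding k_def p_def by (simp add: prod_eq_iff)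
    qed
  qed
qed




lemma eps_le:
  fixes X R :: real
  assumes R: "0 \<le> R" and h: "\<And>e. 0 < e \<Longrightarrow> e < 1 \<Longrightarrow> X \<le> e * R"
  shows "X \<le> 0"
proof (rule ccontr)
  assume "\<not> X \<le> 0"
  then have X: "0 < X" by simp
  define e where "e = min (1/2) (X / (R + 1))"
  have e0: "0 < e" unfolding e_def using X R by simp
  have e1: "e < 1" unfolding e_def by simp
  have "e * R \<le> X / (R + 1) * R" unfolding e_def using R by (intro mult_right_mono) auto
  also have "\<dots> < X" using X R by (simp add: field_simps)
  finally show False using h[OF e0 e1] by simp
qed

lemma ext_t1:
  assumes m: "Metric_space Z P" and g: "geodesic Z P \<gamma>" and eta: "geodesic Z P \<eta>" and s: "s \<in> {0..1}"
    and h: "\<And>t. 0 < t \<Longrightarrow> t < 1 \<Longrightarrow> P (\<eta> 0) (\<eta> s) \<le> P (\<gamma> t) (\<eta> s)"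
  shows "P (\<eta> 0) (\<eta> s) \<le> P (\<gamma> 1) (\<eta> s)"
proof -
  define R where "R = P (\<gamma> 0) (\<gamma> 1)"
  have R0: "0 \<le> R" unfolding R_def by (rule Metric_space.nonneg[OF m])
  have one: "(1::real) \<in> {0..1}" by simp
  have "P (\<eta> 0) (\<eta> s) - P (\<gamma> 1) (\<eta> s) \<le> 0"
  proof (rule eps_le[OF R0])
    fix e :: real assume e0: "0 < e" and e1: "e < 1"
    define t where "t = 1 - e"
    have t: "t \<in> {0..1}" "0 < t" "t < 1" using e0 e1 unfolding t_def by auto
    have "P (\<gamma> t) (\<eta> s) \<le> P (\<gamma> t) (\<gamma> 1) + P (\<gamma> 1) (\<eta> s)"
      by (rule Metric_space.triangle[OF m geod_mem[OF g t(1)] geod_mem[OF g one] geod_mem[OF eta s]])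
    moreover have "P (\<gamma> t) (\<gamma> 1) = e * R"
      using geod_dist[OF g t(1) one] t e0 unfolding R_def t_def by simp
    ultimately show "P (\<eta> 0) (\<eta> s) - P (\<gamma> 1) (\<eta> s) \<le> e * R" using h[OF t(2) t(3)] by simp
  qed
  then show ?thesis by simp
qed

context ULset
begin

definition adm2 :: "(nat \<Rightarrow> 'a \<times> real) set" where
  "adm2 = {a. (\<lambda>n. fst (a n)) \<in> S \<and> (\<exists>B. eventually (\<lambda>n. \<bar>snd (a n)\<bar> \<le> B) \<omega>)}"

definition Phi2 :: "(nat \<Rightarrow> 'a \<times> real) \<Rightarrow> (nat \<Rightarrow> 'a) set \<times> real" where
  "Phi2 a = (cls (\<lambda>n. fst (a n)), Lim \<omega> (\<lambda>n. snd (a n)))"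

lemma adm2_snd_lim:
  assumes "a \<in> adm2" shows "((\<lambda>n. snd (a n)) \<longlongrightarrow> Lim \<omega> (\<lambda>n. snd (a n))) \<omega>"
proof -
  obtain B where "eventually (\<lambda>n. \<bar>snd (a n)\<bar> \<le> B) \<omega>" using assms unfolding adm2_def by blast
  then show ?thesis by (rule ultra_real_lim[OF U])
qed

lemma core_prod:
  assumes geoN: "\<And>n. geodesic_space (M n) (d n)" and soN: "\<And>n. SO_star (M n) (d n)"
    and ug: "uniquely_geodesic (UL_space \<omega> M d x) (UL_dist \<omega> d)"
    and eta: "geodesic (UL_space \<omega> M d x \<times> UNIV) (prod_l2 (UL_dist \<omega> d)) \<eta>"
    and w: "w \<in> UL_space \<omega> M d x \<times> UNIV"
    and near: "\<And>s. s \<in> {0..1} \<Longrightarrow> prod_l2 (UL_dist \<omega> d) w (\<eta> 0) \<le> prod_l2 (UL_dist \<omega> d) w (\<eta> s)"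
    and uniq: "\<And>s. s \<in> {0..1} \<Longrightarrow> prod_l2 (UL_dist \<omega> d) w (\<eta> s) = prod_l2 (UL_dist \<omega> d) w (\<eta> 0) \<Longrightarrow> \<eta> s = \<eta> 0"
    and s: "s \<in> {0..1}"
  shows "prod_l2 (UL_dist \<omega> d) (\<eta> 0) (\<eta> s) \<le> prod_l2 (UL_dist \<omega> d) w (\<eta> s)"
proof (rule core[OF U _ _ prod_ug[OF ug] _ _ _ _ _ eta w near uniq s, where adm = adm2 and \<Phi> = Phi2
      and N = "\<lambda>n. M n \<times> UNIV" and e = "\<lambda>n. prod_l2 (d n)"])
  show "\<And>n. geodesic_space (M n \<times> UNIV) (prod_l2 (d n))" by (rule prod_geodesic_space[OF geoN])
  show "\<And>n. SO (M n \<times> UNIV) (prod_l2 (d n))" using soN by (simp add: SO_star_def)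
  show "\<And>a n. a \<in> adm2 \<Longrightarrow> a n \<in> M n \<times> UNIV"
    unfolding adm2_def using seqs_mem by (auto simp: mem_Times_iff)
  show "\<exists>a\<in>adm2. Phi2 a = z" if z: "z \<in> UL_space \<omega> M d x \<times> UNIV" for z
  proof -
    obtain y where y: "y \<in> S" "fst z = cls y" using z by (auto simp: space_eq)
    define a where "a = (\<lambda>n. (y n, snd z))"
    have "a \<in> adm2" unfolding adm2_def a_def using y(1)
      by (auto intro!: exI[of _ "\<bar>snd z\<bar>"] always_eventually)
    moreover have "Lim \<omega> (\<lambda>n. snd z) = snd z" by (rule tendsto_Lim[OF nb tendsto_const])
    then have "Phi2 a = z" unfolding Phi2_def a_def using y(2) by (simp add: prod_eq_iff)
    ultimately show ?thesis by blast
  qed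
  show "\<And>a. a \<in> adm2 \<Longrightarrow> Phi2 a \<in> UL_space \<omega> M d x \<times> UNIV"
    unfolding adm2_def Phi2_def by (auto simp: space_eq)
  show "((\<lambda>n. prod_l2 (d n) (a n) (b n)) \<longlongrightarrow> prod_l2 (UL_dist \<omega> d) (Phi2 a) (Phi2 b)) \<omega>"
    if a: "a \<in> adm2" and b: "b \<in> adm2" for a b
  proof -
    have fa: "(\<lambda>n. fst (a n)) \<in> S" and fb: "(\<lambda>n. fst (b n)) \<in> S" using a b by (auto simp: adm2_def)
    have "((\<lambda>n. sqrt ((d n (fst (a n)) (fst (b n)))\<^sup>2 + (snd (a n) - snd (b n))\<^sup>2)) \<longlongrightarrow>
      sqrt ((UL_dist \<omega> d (cls (\<lambda>n. fst (a n))) (cls (\<lambda>n. fst (b n))))\<^sup>2 +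
            (Lim \<omega> (\<lambda>n. snd (a n)) - Lim \<omega> (\<lambda>n. snd (b n)))\<^sup>2)) \<omega>"
      by (intro tendsto_intros lim_cls[OF fa fb] adm2_snd_lim a b)
    then show ?thesis unfolding prod_l2_eq Phi2_def by simp
  qed
  show "b \<in> adm2" if a: "a \<in> adm2" and b: "\<And>n. b n \<in> M n \<times> UNIV"
    and ev: "\<forall>\<^sub>F n in \<omega>. prod_l2 (d n) (a n) (b n) \<le> B" for a b B
  proof -
    have fa: "(\<lambda>n. fst (a n)) \<in> S" using a by (auto simp: adm2_def)
    obtain Ba where Ba: "eventually (\<lambda>n. \<bar>snd (a n)\<bar> \<le> Ba) \<omega>" using a by (auto simp: adm2_def)
    have ev1: "eventually (\<lambda>n. d n (fst (a n)) (fst (b n)) \<le> B) \<omega>"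
      using ev
    proof eventually_elim
      case (elim n)
      have "d n (fst (a n)) (fst (b n)) \<le> prod_l2 (d n) (a n) (b n)"
        unfolding prod_l2_eq by (rule real_sqrt_sum_squares_ge1)
      then show ?case using elim by simp
    qed
    have "(\<lambda>n. fst (b n)) \<in> S" by (rule close[OF fa _ ev1]) (use b in \<open>auto simp: mem_Times_iff\<close>)
    moreover have "eventually (\<lambda>n. \<bar>snd (b n)\<bar> \<le> Ba + B) \<omega>"
      using ev Ba
    proof eventually_elim
      case (elim n)
      have "\<bar>snd (a n) - snd (b n)\<bar> \<le> sqrt ((d n (fst (a n)) (fst (b n)))\<^sup>2 + \<bar>snd (a n) - snd (b n)\<bar>\<^sup>2)"
        by (rule real_sqrt_sum_squares_ge2)
      then have "\<bar>snd (a n) - snd (b n)\<bar> \<le> prod_l2 (d n) (a n) (b n)" by (simp add: prod_l2_def)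
      then show ?case using elim by linarith
    qed
    ultimately show ?thesis unfolding adm2_def by blast
  qed
qed

lemma SOstar_UL:
  assumes geoN: "\<And>n. geodesic_space (M n) (d n)" and soN: "\<And>n. SO_star (M n) (d n)"
    and ug: "uniquely_geodesic (UL_space \<omega> M d x) (UL_dist \<omega> d)"
    and pr: "unique_projections (UL_space \<omega> M d x) (UL_dist \<omega> d)"
  shows "SO_star (UL_space \<omega> M d x) (UL_dist \<omega> d)"
  unfolding SO_star_def SO_def
proof (intro allI impI)
  let ?Z = "UL_space \<omega> M d x \<times> (UNIV::real set)" and ?D = "prod_l2 (UL_dist \<omega> d)"
  have m0: "Metric_space (UL_space \<omega> M d x) (UL_dist \<omega> d)"
    using ug by (simp add: uniquely_geodesic_def geodesic_space_def)
  have m: "Metric_space ?Z ?D" by (rule prod_metric[OF m0])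
  fix \<gamma> \<eta> assume h: "geodesic ?Z ?D \<gamma> \<and> geodesic ?Z ?D \<eta> \<and> \<gamma> 0 = \<eta> 0 \<and> orth ?D \<gamma> \<eta>"
  then have g: "geodesic ?Z ?D \<gamma>" and eta: "geodesic ?Z ?D \<eta>" and e0: "\<gamma> 0 = \<eta> 0"
    and o: "orth ?D \<gamma> \<eta>" by auto
  have main: "?D (\<eta> 0) (\<eta> s) \<le> ?D (\<gamma> t) (\<eta> s)" if t0: "0 < t" and t1: "t < 1" and s: "s \<in> {0..1}" for s t
  proof -
    have t: "t \<in> {0..1}" using t0 t1 by simp
    have w: "\<gamma> t \<in> ?Z" by (rule geod_mem[OF g t])
    have near: "?D (\<gamma> t) (\<eta> 0) \<le> ?D (\<gamma> t) (\<eta> s')" if s': "s' \<in> {0..1}" for s'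
    proof -
      have "?D (\<gamma> 0) (\<gamma> t) \<le> ?D (\<eta> s') (\<gamma> t)" using o s' t unfolding orth_def by blast
      moreover have "?D (\<eta> 0) (\<gamma> t) = ?D (\<gamma> t) (\<eta> 0)" by (rule Metric_space.commute[OF m])
      moreover have "?D (\<eta> s') (\<gamma> t) = ?D (\<gamma> t) (\<eta> s')" by (rule Metric_space.commute[OF m])
      ultimately show ?thesis using e0 by simp
    qed
    have uq: "\<eta> s' = \<eta> 0" if "s' \<in> {0..1}" "?D (\<gamma> t) (\<eta> s') = ?D (\<gamma> t) (\<eta> 0)" for s'
      by (rule prod_uniq[OF ug pr g eta e0 o t0 t1 that])
    show ?thesis by (rule core_prod[OF geoN soN ug eta w near uq s])
  qed
  show "orth ?D \<eta> \<gamma>" unfolding orth_def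
  proof (intro ballI)
    fix s t :: real assume t: "t \<in> {0..1}" and s: "s \<in> {0..1}"
    show "?D (\<eta> 0) (\<eta> s) \<le> ?D (\<gamma> t) (\<eta> s)"
    proof (cases "t = 0")
      case True then show ?thesis using e0 by simp
    next
      case False
      show ?thesis
      proof (cases "t = 1")
        case True
        have "?D (\<eta> 0) (\<eta> s) \<le> ?D (\<gamma> 1) (\<eta> s)"
          by (rule ext_t1[OF m g eta s main[OF _ _ s]])
        then show ?thesis using True by simp
      next
        case f1: False
        show ?thesis using main[OF _ _ s] t False f1 by simp
      qed
    qed
  qed
qed

end

theorem lemma20:
  fixes M :: "nat \<Rightarrow> 'a set" and d :: "nat \<Rightarrow> 'a \<Rightarrow> 'a \<Rightarrow> real"
    and x :: "nat \<Rightarrow> 'a" and \<omega> :: "nat filter"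
  assumes geo: "\<And>n. geodesic_space (M n) (d n)"
    and base: "\<And>n. x n \<in> M n"
    and ultra: "nonprincipal_ultrafilter \<omega>"
    and ug: "uniquely_geodesic (UL_space \<omega> M d x) (UL_dist \<omega> d)"
    and proj: "unique_projections (UL_space \<omega> M d x) (UL_dist \<omega> d)"
  shows "((\<forall>n. SO (M n) (d n)) \<longrightarrow> SO (UL_space \<omega> M d x) (UL_dist \<omega> d)) \<and>
         ((\<forall>n. SO_star (M n) (d n)) \<longrightarrow> SO_star (UL_space \<omega> M d x) (UL_dist \<omega> d))"
proof -
  have U: "ultra \<omega>" using ultra unfolding nonprincipal_ultrafilter_def ultra_def by blast
  have met: "\<And>n. Metric_space (M n) (d n)" using geo by (simp add: geodesic_space_def)
  interpret ULset M d x \<omega> by (rule ULset.intro[OF met base U])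
  show ?thesis
  proof (intro conjI impI)
    assume "\<forall>n. SO (M n) (d n)"
    then show "SO (UL_space \<omega> M d x) (UL_dist \<omega> d)" by (intro SO_UL[OF geo _ ug proj]) blast
  next
    assume "\<forall>n. SO_star (M n) (d n)"
    then show "SO_star (UL_space \<omega> M d x) (UL_dist \<omega> d)" by (intro SOstar_UL[OF geo _ ug proj]) blast
  qed
qed



end
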